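(* Let $\ell\ge 6$ and $w\ge 0$ be integers, let $A=\langle A_1,\dots,A_\ell\rangle$ and $B=\langle B_1,\dots,B_\ell\rangle$ be real sequences, and let $\delta:\mathbb{R}\times\mathbb{R}\to[0,\infty)$ be a symmetric pairwise cost function with $\delta(a,a)=0$ for all $a$. Suppose that for all reals $a,b,x,y$ with $a\le x\le y\le b$ or $a\ge x\ge y\ge b$ we have $\delta(a,b)\ge \delta(a,y)+\delta(b,x)-\delta(x,y)$. Define $$\mathrm{LB\_Petitjean}_w(A,B)=\mathrm{minlrpaths}(A,B)+\sum_{i=4}^{\ell-3} \kappa_i+\sum_{j=4}^{\ell-3}\beta_j,$$ where $\kappa_i=\delta(A_i,\mathbb{U}^B_i)$ if $A_i>\mathbb{U}^B_i$, $\kappa_i=\delta(A_i,\mathbb{L}^B_i)$ if $A_i<\mathbb{L}^B_i$, and $\kappa_i=0$ otherwise; and $\beta_j$ is given by the first applicable case among: (1) $\delta(B_j,\mathbb{U}^A_j)-\delta(\mathbb{U}^{\Omega}_j,\mathbb{U}^A_j)$ if $B_j>\mathbb{U}^{\Omega}_j>\mathbb{U}^A_j$; (2) $\delta(B_j,\mathbb{L}^A_j)-\delta(\mathbb{L}^{\Omega}_j,\mathbb{L}^A_j)$ if $B_j<\mathbb{L}^{\Omega}_j<\mathbb{L}^A_j$; (3) $\delta(B_j,\mathbb{U}^{\Omega}_j)$ if $B_j>\mathbb{U}^{\Omega}_j$ and $\mathbb{U}^{\Omega}_j\le\mathbb{U}^A_j$; (4) $\delta(B_j,\mathbb{L}^{\Omega}_j)$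 if $B_j<\mathbb{L}^{\Omega}_j$ and $\mathbb{L}^{\Omega}_j\ge\mathbb{L}^A_j$; (5) $0$ otherwise. Then $\mathrm{LB\_Petitjean}_w(A,B)\le \mathrm{DTW}_w(A,B)$.
   Context: A warping path of $A$ and $B$ is a sequence of pairs $(i_1,j_1),\dots,(i_P,j_P)$ with $(i_1,j_1)=(1,1)$, $(i_P,j_P)=(\ell,\ell)$, and for each $1<k\le P$, $(i_{k-1},j_{k-1})\in\{(i_k-1,j_k),(i_k,j_k-1),(i_k-1,j_k-1)\}$. $\mathrm{DTW}_w(A,B)$ is the minimum of $\sum_{k=1}^P\delta(A_{i_k},B_{j_k})$ over all warping paths all of whose pairs satisfy $i_k-w\le j_k\le i_k+w$. For a real sequence $S$ of length $\ell$, its upper and lower envelopes with window $w$ are $\mathbb{U}^S_i=\max_{\max(1,i-w)\le j\le\min(\ell,i+w)}S_j$ and $\mathbb{L}^S_i=\min_{\max(1,i-w)\le j\le\min(\ell,i+w)}S_j$. The projection $\Omega=\Omega_w(A,B)$ is the sequence with $\Omega_i=\mathbb{U}^B_i$ if $A_i>\mathbb{U}^B_i$, $\Omega_i=\mathbb{L}^B_i$ if $A_i<\mathbb{L}^B_i$, and $\Omega_i=A_i$ otherwise; $\mathbb{U}^{\Omega},\mathbb{L}^{\Omega}$ are its envelopes with window $w$. Writing $\delta_{i,j}=\delta(A_i,B_j)$, $\mathrm{minlrpaths}(A,B)=\delta_{1,1}+\delta_{\ell,\ell}+\min[\delta_{1,2}+\delta_{1,3},\ \delta_{1,2}+\delta_{2,3},\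 \delta_{2,2}+\delta_{2,3},\ \delta_{2,2}+\delta_{3,3},\ \delta_{2,2}+\delta_{3,2},\ \delta_{2,1}+\delta_{3,2},\ \delta_{2,1}+\delta_{3,1}]+\min[\delta_{\ell,\ell-1}+\delta_{\ell,\ell-2},\ \delta_{\ell,\ell-1}+\delta_{\ell-1,\ell-2},\ \delta_{\ell-1,\ell-1}+\delta_{\ell-1,\ell-2},\ \delta_{\ell-1,\ell-1}+\delta_{\ell-2,\ell-2},\ \delta_{\ell-1,\ell-1}+\delta_{\ell-2,\ell-1},\ \delta_{\ell-1,\ell}+\delta_{\ell-2,\ell-1},\ \delta_{\ell-1,\ell}+\delta_{\ell-2,\ell}]$. *)

theory Defs
  imports Main "HOL.Real"
begin

text \<open>Sequences of length l are functions nat => real, indexed 1..l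
  (values outside 1..l are irrelevant).  A warping path is a nonempty list of index pairs.\<close>

definition warping_path :: "nat \<Rightarrow> nat \<Rightarrow> (nat \<times> nat) list \<Rightarrow> bool" where
  "warping_path l w p \<longleftrightarrow> p \<noteq> [] \<and> hd p = (1,1) \<and> last p = (l,l) \<and>
     (\<forall>k. 0 < k \<and> k < length p \<longrightarrow>
        (let (i,j) = p ! k in p ! (k-1) \<in> {(i-1,j),(i,j-1),(i-1,j-1)} \<and> 1 \<le> i \<and> 1 \<le> j)) \<and>
     (\<forall>k < length p. let (i,j) = p ! k in int i - int w \<le> int j \<and> int j \<le> int i + int w)"

definition path_cost :: "(real \<Rightarrow> real \<Rightarrow> real) \<Rightarrow> (nat \<Rightarrow> real) \<Rightarrow> (nat \<Rightarrow> real)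
    \<Rightarrow> (nat \<times> nat) list \<Rightarrow> real" where
  "path_cost \<delta> A B p = (\<Sum>k<length p. \<delta> (A (fst (p ! k))) (B (snd (p ! k))))"

definition DTW :: "(real \<Rightarrow> real \<Rightarrow> real) \<Rightarrow> nat \<Rightarrow> nat \<Rightarrow> (nat \<Rightarrow> real) \<Rightarrow> (nat \<Rightarrow> real) \<Rightarrow> real" where
  "DTW \<delta> l w A B = Inf {path_cost \<delta> A B p | p. warping_path l w p}"

definition upper_env :: "nat \<Rightarrow> nat \<Rightarrow> (nat \<Rightarrow> real) \<Rightarrow> nat \<Rightarrow> real" where
  "upper_env l w S i = Max {S j | j. max 1 (int i - int w) \<le> int j \<and> j \<le> min l (i + w)}"

definition lower_env :: "nat \<Rightarrow> nat \<Rightarrow> (nat \<Rightarrow> real) \<Rightarrow> nat \<Rightarrow> real" where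
  "lower_env l w S i = Min {S j | j. max 1 (int i - int w) \<le> int j \<and> j \<le> min l (i + w)}"

definition proj :: "nat \<Rightarrow> nat \<Rightarrow> (nat \<Rightarrow> real) \<Rightarrow> (nat \<Rightarrow> real) \<Rightarrow> nat \<Rightarrow> real" where
  "proj l w A B i = (if A i > upper_env l w B i then upper_env l w B i
                     else if A i < lower_env l w B i then lower_env l w B i else A i)"

definition minlrpaths :: "(real \<Rightarrow> real \<Rightarrow> real) \<Rightarrow> nat \<Rightarrow> (nat \<Rightarrow> real) \<Rightarrow> (nat \<Rightarrow> real) \<Rightarrow> real" where
  "minlrpaths \<delta> l A B = (let d = (\<lambda>i j. \<delta> (A i) (B j)) in
     d 1 1 + d l l
     + Min {d 1 2 + d 1 3, d 1 2 + d 2 3, d 2 2 + d 2 3, d 2 2 + d 3 3,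
            d 2 2 + d 3 2, d 2 1 + d 3 2, d 2 1 + d 3 1}
     + Min {d l (l-1) + d l (l-2), d l (l-1) + d (l-1) (l-2),
            d (l-1) (l-1) + d (l-1) (l-2), d (l-1) (l-1) + d (l-2) (l-2),
            d (l-1) (l-1) + d (l-2) (l-1), d (l-1) l + d (l-2) (l-1),
            d (l-1) l + d (l-2) l})"

definition kappa :: "(real \<Rightarrow> real \<Rightarrow> real) \<Rightarrow> nat \<Rightarrow> nat \<Rightarrow> (nat \<Rightarrow> real) \<Rightarrow> (nat \<Rightarrow> real) \<Rightarrow> nat \<Rightarrow> real" where
  "kappa \<delta> l w A B i = (if A i > upper_env l w B i then \<delta> (A i) (upper_env l w B i)
     else if A i < lower_env l w B i then \<delta> (A i) (lower_env l w B i) else 0)"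

definition beta :: "(real \<Rightarrow> real \<Rightarrow> real) \<Rightarrow> nat \<Rightarrow> nat \<Rightarrow> (nat \<Rightarrow> real) \<Rightarrow> (nat \<Rightarrow> real) \<Rightarrow> nat \<Rightarrow> real" where
  "beta \<delta> l w A B j = (let Om = proj l w A B; UO = upper_env l w Om j; LO = lower_env l w Om j;
        UA = upper_env l w A j; LA = lower_env l w A j in
     if B j > UO \<and> UO > UA then \<delta> (B j) UA - \<delta> UO UA
     else if B j < LO \<and> LO < LA then \<delta> (B j) LA - \<delta> LO LA
     else if B j > UO \<and> UO \<le> UA then \<delta> (B j) UO
     else if B j < LO \<and> LO \<ge> LA then \<delta> (B j) LO
     else 0)"

definition LB_Petitjean :: "(real \<Rightarrow> real \<Rightarrow> real) \<Rightarrow> nat \<Rightarrow> nat \<Rightarrow> (nat \<Rightarrow> real) \<Rightarrow> (nat \<Rightarrow> real) \<Rightarrow> real" where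
  "LB_Petitjean \<delta> l w A B = minlrpaths \<delta> l A B + (\<Sum>i=4..l-3. kappa \<delta> l w A B i)
     + (\<Sum>j=4..l-3. beta \<delta> l w A B j)"

end

theory Submission
  imports Defs
begin




lemma wp_facts:
  assumes "warping_path l w p"
  shows "length p > 0" "fst (p!0) = 1" "snd (p!0) = 1" "fst (p!(length p - 1)) = l" "snd (p!(length p - 1)) = l"
    "\<And>k. Suc k < length p \<Longrightarrow> fst (p!k) \<le> fst (p!Suc k) \<and> fst (p!Suc k) \<le> fst (p!k) + 1 \<and>
        snd (p!k) \<le> snd (p!Suc k) \<and> snd (p!Suc k) \<le> snd (p!k) + 1 \<and>
        fst (p!k) + snd (p!k) < fst (p!Suc k) + snd (p!Suc k)"
    "\<And>k. k < length p \<Longrightarrow> int (fst (p!k)) - int w \<le> int (snd (p!k)) \<and> int (snd (p!k)) \<le> int (fst (p!k)) + int w"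
proof -
  have ne: "p \<noteq> []" and h: "hd p = (1,1)" and la: "last p = (l,l)"
    and st: "\<And>k. 0 < k \<and> k < length p \<Longrightarrow>
        (let (i,j) = p ! k in p ! (k-1) \<in> {(i-1,j),(i,j-1),(i-1,j-1)} \<and> 1 \<le> i \<and> 1 \<le> j)"
    and win: "\<And>k. k < length p \<Longrightarrow> (let (i,j) = p ! k in int i - int w \<le> int j \<and> int j \<le> int i + int w)"
    using assms unfolding warping_path_def by auto
  show "length p > 0" using ne by simp
  show "fst (p!0) = 1" "snd (p!0) = 1" using h ne by (simp_all add: hd_conv_nth)
  show "fst (p!(length p - 1)) = l" "snd (p!(length p - 1)) = l" using la ne by (simp_all add: last_conv_nth)
  fix k assume k: "Suc k < length p"
  obtain i j where ij: "p ! Suc k = (i,j)" by fastforce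
  have "p ! k \<in> {(i-1,j),(i,j-1),(i-1,j-1)} \<and> 1 \<le> i \<and> 1 \<le> j" using st[of "Suc k"] k ij by auto
  then show "fst (p!k) \<le> fst (p!Suc k) \<and> fst (p!Suc k) \<le> fst (p!k) + 1 \<and>
        snd (p!k) \<le> snd (p!Suc k) \<and> snd (p!Suc k) \<le> snd (p!k) + 1 \<and>
        fst (p!k) + snd (p!k) < fst (p!Suc k) + snd (p!Suc k)" using ij by auto
next
  fix k assume k: "k < length p"
  have win: "\<And>k. k < length p \<Longrightarrow> (let (i,j) = p ! k in int i - int w \<le> int j \<and> int j \<le> int i + int w)"
    using assms unfolding warping_path_def by auto
  obtain i j where ij: "p ! k = (i,j)" by fastforce
  show "int (fst (p!k)) - int w \<le> int (snd (p!k)) \<and> int (snd (p!k)) \<le> int (fst (p!k)) + int w"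
    using win[OF k] ij by auto
qed

lemma diag_wp:
  assumes "l \<ge> 1"
  shows "warping_path l w (map (\<lambda>k. (Suc k, Suc k)) [0..<l])"
  unfolding warping_path_def using assms
  by (auto simp: hd_map last_map Let_def)

lemma ivt:
  fixes f :: "nat \<Rightarrow> nat"
  assumes "f 0 \<le> i" "i \<le> f n" "\<And>k. k < n \<Longrightarrow> f (Suc k) \<le> f k + 1"
  shows "\<exists>k\<le>n. f k = i"
  using assms
proof (induction n)
  case 0 then show ?case by auto
next
  case (Suc n)
  show ?case
  proof (cases "i \<le> f n")
    case True
    then obtain k where "k \<le> n" "f k = i" using Suc by auto
    then show ?thesis by (intro exI[of _ k]) auto
  next
    case False
    then have "f (Suc n) = i" using Suc.prems(2) Suc.prems(3)[of n] by auto
    then show ?thesis by auto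
  qed
qed

lemma mono_path:
  fixes f :: "nat \<Rightarrow> nat"
  assumes "\<And>k. Suc k < P \<Longrightarrow> f k \<le> f (Suc k)"
  shows "k \<le> k' \<Longrightarrow> k' < P \<Longrightarrow> f k \<le> f k'"
proof (induction k')
  case 0 then show ?case by auto
next
  case (Suc k')
  show ?case
  proof (cases "k = Suc k'")
    case True then show ?thesis by simp
  next
    case False
    then have "f k \<le> f k'" using Suc by auto
    also have "\<dots> \<le> f (Suc k')" using assms Suc by auto
    finally show ?thesis .
  qed
qed

lemma front:
  fixes f g :: "nat \<Rightarrow> nat"
  assumes P: "P > 0" and f0: "f 0 = 1" "g 0 = 1" and fl: "f (P-1) = l" "g (P-1) = l" and l: "l \<ge> 6"
  and st: "\<And>k. Suc k < P \<Longrightarrow> f k \<le> f (Suc k) \<and> f (Suc k) \<le> f k + 1 \<and> g k \<le> g (Suc k) \<and> g (Suc k) \<le> g k + 1 \<and> f k + g k < f (Suc k) + g (Suc k)"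
  shows "\<exists>p q. 0 < p \<and> p < q \<and> q < P \<and> f p \<le> 3 \<and> g p \<le> 3 \<and> f q \<le> 3 \<and> g q \<le> 3 \<and>
     ((f p, g p, f q, g q) \<in> {(1,2,1,3),(1,2,2,3),(2,2,2,3),(2,2,3,3),(2,2,3,2),(2,1,3,2),(2,1,3,1)})"
proof -
  have P2: "P \<ge> 2" using P f0 fl l by (cases "P = 1") auto
  have s0: "f 0 \<le> f 1 \<and> f 1 \<le> f 0 + 1 \<and> g 0 \<le> g 1 \<and> g 1 \<le> g 0 + 1 \<and> f 0 + g 0 < f 1 + g 1" using st[of 0] P2 by simp
  have P3: "P \<ge> 3" using P2 s0 f0 fl l by (cases "P = 2") auto
  have s1: "f 1 \<le> f 2 \<and> f 2 \<le> f 1 + 1 \<and> g 1 \<le> g 2 \<and> g 2 \<le> g 1 + 1 \<and> f 1 + g 1 < f 2 + g 2" using st[of 1] P3 by (simp add: numeral_2_eq_2)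
  show ?thesis
  proof (cases "f 2 = 2 \<and> g 2 = 2")
    case True
    have P4: "P \<ge> 4" using P3 True fl l by (cases "P = 3") auto
    have s2: "f 2 \<le> f 3 \<and> f 3 \<le> f 2 + 1 \<and> g 2 \<le> g 3 \<and> g 3 \<le> g 2 + 1 \<and> f 2 + g 2 < f 3 + g 3" using st[of 2] P4 by (simp add: numeral_3_eq_3)
    have "f 3 = 2 \<and> g 3 = 3 \<or> f 3 = 3 \<and> g 3 = 2 \<or> f 3 = 3 \<and> g 3 = 3" using True s2 by linarith
    then have "(f 2, g 2, f 3, g 3) \<in> {(1,2,1,3),(1,2,2,3),(2,2,2,3),(2,2,3,3),(2,2,3,2),(2,1,3,2),(2,1,3,1)}"
      using True by (elim disjE; simp)
    then show ?thesis using True s2 P4 by (intro exI[of _ 2] exI[of _ 3]) auto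
  next
    case False
    have c1: "f 1 = 1 \<and> g 1 = 2 \<or> f 1 = 2 \<and> g 1 = 1 \<or> f 1 = 2 \<and> g 1 = 2" using s0 f0 by linarith
    have "f 2 = f 1 \<and> g 2 = g 1 + 1 \<or> f 2 = f 1 + 1 \<and> g 2 = g 1 \<or> f 2 = f 1 + 1 \<and> g 2 = g 1 + 1" using s1 by linarith
    then have "(f 1, g 1, f 2, g 2) \<in> {(1,2,1,3),(1,2,2,3),(2,2,2,3),(2,2,3,3),(2,2,3,2),(2,1,3,2),(2,1,3,1)}"
      using False c1 by (elim disjE; simp)
    then show ?thesis using P3 s0 s1 f0 by (intro exI[of _ 1] exI[of _ 2]) auto
  qed
qed

lemma back_part:
  fixes f g :: "nat \<Rightarrow> nat"
  assumes P: "P > 0" and f0: "f 0 = 1" "g 0 = 1" and fl: "f (P-1) = l" "g (P-1) = l" and l: "l \<ge> 6"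
  and st: "\<And>k. Suc k < P \<Longrightarrow> f k \<le> f (Suc k) \<and> f (Suc k) \<le> f k + 1 \<and> g k \<le> g (Suc k) \<and> g (Suc k) \<le> g k + 1 \<and> f k + g k < f (Suc k) + g (Suc k)"
  shows "\<exists>p q. q < p \<and> p < P - 1 \<and> f p \<ge> l-2 \<and> g p \<ge> l-2 \<and> f q \<ge> l-2 \<and> g q \<ge> l-2 \<and>
     ((f p, g p, f q, g q) \<in> {(l,l-1,l,l-2), (l,l-1,l-1,l-2), (l-1,l-1,l-1,l-2), (l-1,l-1,l-2,l-2),
         (l-1,l-1,l-2,l-1), (l-1,l,l-2,l-1), (l-1,l,l-2,l)})"
proof -
  define m where "m = P - 1"
  have P2: "P \<ge> 2" using P f0 fl l by (cases "P = 1") auto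
  have mm: "Suc (m-1) = m" "m < P" using P2 m_def by auto
  have s0: "f (m-1) \<le> f m \<and> f m \<le> f (m-1) + 1 \<and> g (m-1) \<le> g m \<and> g m \<le> g (m-1) + 1 \<and> f (m-1) + g (m-1) < f m + g m"
    using st[of "m-1"] mm by simp
  have fm: "f m = l" "g m = l" using fl m_def by auto
  have m2: "m - 1 \<ge> 1" using s0 fm f0 l by (cases "m - 1 = 0") auto
  have mm2: "Suc (m-2) = m - 1" "m - 1 < P" using m2 mm by auto
  have s1: "f (m-2) \<le> f (m-1) \<and> f (m-1) \<le> f (m-2) + 1 \<and> g (m-2) \<le> g (m-1) \<and> g (m-1) \<le> g (m-2) + 1 \<and> f (m-2) + g (m-2) < f (m-1) + g (m-1)"
    using st[of "m-2"] mm2 by simp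
  show ?thesis
  proof (cases "f (m-2) = l-1 \<and> g (m-2) = l-1")
    case True
    have m3: "m - 2 \<ge> 1" using True f0 l by (cases "m - 2 = 0") auto
    have mm3: "Suc (m-3) = m - 2" "m - 2 < P" using m3 mm by auto
    have s2: "f (m-3) \<le> f (m-2) \<and> f (m-2) \<le> f (m-3) + 1 \<and> g (m-3) \<le> g (m-2) \<and> g (m-2) \<le> g (m-3) + 1 \<and> f (m-3) + g (m-3) < f (m-2) + g (m-2)"
      using st[of "m-3"] mm3 by simp
    have "(f (m-2), g (m-2), f (m-3), g (m-3)) \<in> {(l,l-1,l,l-2), (l,l-1,l-1,l-2), (l-1,l-1,l-1,l-2), (l-1,l-1,l-2,l-2),
         (l-1,l-1,l-2,l-1), (l-1,l,l-2,l-1), (l-1,l,l-2,l)}"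
    proof -
      have "f (m-3) = l-1 \<and> g (m-3) = l-2 \<or> f (m-3) = l-2 \<and> g (m-3) = l-1 \<or> f (m-3) = l-2 \<and> g (m-3) = l-2" using True s2 l by linarith
      then show ?thesis using True by (elim disjE) (simp_all only: insert_iff refl simp_thms)
    qed
    moreover have "m-3 < m-2" "m-2 < P-1" using m3 m_def by auto
    moreover have "f (m-2) \<ge> l-2" "g (m-2) \<ge> l-2" "f (m-3) \<ge> l-2" "g (m-3) \<ge> l-2"
      using True s2 by linarith+
    ultimately show ?thesis by blast
  next
    case False
    have "(f (m-1), g (m-1), f (m-2), g (m-2)) \<in> {(l,l-1,l,l-2), (l,l-1,l-1,l-2), (l-1,l-1,l-1,l-2), (l-1,l-1,l-2,l-2),
         (l-1,l-1,l-2,l-1), (l-1,l,l-2,l-1), (l-1,l,l-2,l)}"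
    proof -
      have c1: "f (m-1) = l \<and> g (m-1) = l-1 \<or> f (m-1) = l-1 \<and> g (m-1) = l \<or> f (m-1) = l-1 \<and> g (m-1) = l-1" using s0 fm l by linarith
      have "f (m-2) = f (m-1) \<and> g (m-2) = g (m-1) - 1 \<or> f (m-2) = f (m-1) - 1 \<and> g (m-2) = g (m-1) \<or> f (m-2) = f (m-1) - 1 \<and> g (m-2) = g (m-1) - 1" using s1 by linarith
      then show ?thesis using False c1 l by (elim disjE) (simp_all only: insert_iff refl simp_thms diff_diff_left one_add_one)
    qed
    moreover have "m-2 < m-1" "m-1 < P-1" using m2 m_def by auto
    moreover have "f (m-1) \<ge> l-2" "g (m-1) \<ge> l-2" "f (m-2) \<ge> l-2" "g (m-2) \<ge> l-2"
      using s0 s1 fm by linarith+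
    ultimately show ?thesis by blast
  qed
qed

lemma env:
  assumes "1 \<le> i" "i \<le> l" "1 \<le> j" "j \<le> l" "int i - int w \<le> int j" "int j \<le> int i + int w"
  shows "lower_env l w S i \<le> S j" "S j \<le> upper_env l w S i"
proof -
  have eq: "{S j | j. max 1 (int i - int w) \<le> int j \<and> j \<le> min l (i + w)} = S ` {j. max 1 (int i - int w) \<le> int j \<and> j \<le> min l (i + w)}"
    by auto
  have fin: "finite {j. max 1 (int i - int w) \<le> int j \<and> j \<le> min l (i + w)}"
    by (rule finite_subset[of _ "{..l}"]) auto
  have mem: "S j \<in> {S j | j. max 1 (int i - int w) \<le> int j \<and> j \<le> min l (i + w)}"
    using assms by auto
  show "lower_env l w S i \<le> S j" unfolding lower_env_def
    by (rule Min_le) (use eq fin mem in auto)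
  show "S j \<le> upper_env l w S i" unfolding upper_env_def
    by (rule Max_ge) (use eq fin mem in auto)
qed

context
  fixes \<delta> :: "real \<Rightarrow> real \<Rightarrow> real"
  assumes nn: "\<And>a b. \<delta> a b \<ge> 0"
    and sym: "\<And>a b. \<delta> a b = \<delta> b a"
    and z: "\<And>a. \<delta> a a = 0"
    and T: "\<And>a b x y. (a \<le> x \<and> x \<le> y \<and> y \<le> b) \<or> (a \<ge> x \<and> x \<ge> y \<and> y \<ge> b) \<Longrightarrow>
           \<delta> a b \<ge> \<delta> a y + \<delta> b x - \<delta> x y"
begin

lemma superadd:
  assumes h: "(a \<le> x \<and> x \<le> b) \<or> (a \<ge> x \<and> x \<ge> b)"
  shows "\<delta> a b \<ge> \<delta> a x + \<delta> x b"
proof -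
  have "\<delta> a b \<ge> \<delta> a x + \<delta> b x - \<delta> x x" using T[of a x x b] h by auto
  thus ?thesis using sym[of b x] z[of x] by simp
qed

lemma beta_nn:
  "0 \<le> (if b > UO \<and> UO > UA then \<delta> b UA - \<delta> UO UA
     else if b < LO \<and> LO < LA then \<delta> b LA - \<delta> LO LA
     else if b > UO \<and> UO \<le> UA then \<delta> b UO
     else if b < LO \<and> LO \<ge> LA then \<delta> b LO
     else 0)"
proof -
  have 1: "\<delta> b UA \<ge> \<delta> b UO + \<delta> UO UA" if "b > UO \<and> UO > UA"
    using superadd[of b UO UA] that by auto
  have 2: "\<delta> b LA \<ge> \<delta> b LO + \<delta> LO LA" if "b < LO \<and> LO < LA"
    using superadd[of b LO LA] that by auto
  show ?thesis using 1 2 nn[of b UO] nn[of b LO] nn[of b UA] nn[of b LA] by auto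
qed

lemma cell:
  assumes "LB \<le> b" "b \<le> UB" "LA \<le> a" "a \<le> UA" "LO \<le> om" "om \<le> UO"
  and om: "om = (if a > UB then UB else if a < LB then LB else a)"
  shows "\<delta> a b \<ge> (if a > UB then \<delta> a UB else if a < LB then \<delta> a LB else 0) +
     (if b > UO \<and> UO > UA then \<delta> b UA - \<delta> UO UA
     else if b < LO \<and> LO < LA then \<delta> b LA - \<delta> LO LA
     else if b > UO \<and> UO \<le> UA then \<delta> b UO
     else if b < LO \<and> LO \<ge> LA then \<delta> b LO
     else 0)"
proof -
  define K where "K = (if a > UB then \<delta> a UB else if a < LB then \<delta> a LB else 0)"
  have K5: "\<delta> a b \<ge> K"
  proof -
    have "\<delta> a b \<ge> \<delta> a UB" if "a > UB"
      using superadd[of a UB b] nn[of UB b] that assms by auto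
    moreover have "\<delta> a b \<ge> \<delta> a LB" if "a < LB"
      using superadd[of a LB b] nn[of LB b] that assms by auto
    ultimately show ?thesis unfolding K_def using nn[of a b] by auto
  qed
  show ?thesis
  proof (cases "b > UO \<and> UO > UA")
    case True
    have naUB: "\<not> a > UB" using True assms by auto
    have 1: "\<delta> a b \<ge> \<delta> a UO + \<delta> b UA - \<delta> UA UO" using T[of a UA UO b] True assms by auto
    have 2: "\<delta> a UO \<ge> K"
    proof (cases "a < LB")
      case True
      then show ?thesis unfolding K_def using naUB superadd[of a LB UO] nn[of LB UO] assms by auto
    next
      case False
      then show ?thesis unfolding K_def using naUB nn[of a UO] by auto
    qed
    show ?thesis using 1 2 True sym[of UA UO] unfolding K_def by auto
  next
    case nC1: False
    show ?thesis
    proof (cases "b < LO \<and> LO < LA")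
      case True
      have naLB: "\<not> a < LB" using True assms by auto
      have 1: "\<delta> a b \<ge> \<delta> a LO + \<delta> b LA - \<delta> LA LO" using T[of a LA LO b] True assms by auto
      have 2: "\<delta> a LO \<ge> K"
      proof (cases "a > UB")
        case True
        then show ?thesis unfolding K_def using naLB superadd[of a UB LO] nn[of UB LO] assms by auto
      next
        case False
        then show ?thesis unfolding K_def using naLB nn[of a LO] by auto
      qed
      show ?thesis using 1 2 True nC1 sym[of LA LO] unfolding K_def by auto
    next
      case nC2: False
      show ?thesis
      proof (cases "b > UO \<and> UO \<le> UA")
        case True
        have naUB: "\<not> a > UB" using True assms by auto
        have "\<delta> a b \<ge> K + \<delta> b UO"
        proof (cases "a < LB")
          case True
          have "\<delta> a b \<ge> \<delta> a LB + \<delta> LB b" using superadd[of a LB b] True assms by auto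
          moreover have "\<delta> b LB \<ge> \<delta> b UO + \<delta> UO LB" using superadd[of b UO LB] True assms \<open>b > UO \<and> UO \<le> UA\<close> by auto
          ultimately show ?thesis unfolding K_def using True naUB sym[of LB b] nn[of UO LB] by auto
        next
          case False
          have "om = a" using False naUB om by auto
          have "\<delta> b a \<ge> \<delta> b UO + \<delta> UO a" using superadd[of b UO a] \<open>om = a\<close> assms \<open>b > UO \<and> UO \<le> UA\<close> by auto
          then show ?thesis unfolding K_def using False naUB sym[of b a] nn[of UO a] by auto
        qed
        then show ?thesis using True nC1 nC2 unfolding K_def by auto
      next
        case nC3: False
        show ?thesis
        proof (cases "b < LO \<and> LO \<ge> LA")
          case True
          have naLB: "\<not> a < LB" using True assms by auto
          have "\<delta> a b \<ge> K + \<delta> b LO"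
          proof (cases "a > UB")
            case True
            have "\<delta> a b \<ge> \<delta> a UB + \<delta> UB b" using superadd[of a UB b] True assms by auto
            moreover have "\<delta> b UB \<ge> \<delta> b LO + \<delta> LO UB" using superadd[of b LO UB] True assms \<open>b < LO \<and> LO \<ge> LA\<close> by auto
            ultimately show ?thesis unfolding K_def using True naLB sym[of UB b] nn[of LO UB] by auto
          next
            case False
            have "om = a" using False naLB om by auto
            have "\<delta> b a \<ge> \<delta> b LO + \<delta> LO a" using superadd[of b LO a] \<open>om = a\<close> assms \<open>b < LO \<and> LO \<ge> LA\<close> by auto
            then show ?thesis unfolding K_def using False naLB sym[of b a] nn[of LO a] by auto
          qed
          then show ?thesis using True nC1 nC2 nC3 unfolding K_def by auto
        next
          case False
          then show ?thesis using K5 nC1 nC2 nC3 unfolding K_def by auto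
        qed
      qed
    qed
  qed
qed


lemma path_bound:
  assumes l6: "l \<ge> 6" and wp: "warping_path l w p"
  shows "LB_Petitjean \<delta> l w A B \<le> path_cost \<delta> A B p"
proof -
  define P where "P = length p"
  define f where "f = (\<lambda>k. fst (p!k))"
  define g where "g = (\<lambda>k. snd (p!k))"
  have P0: "P > 0" and f0: "f 0 = 1" "g 0 = 1" and fl: "f (P-1) = l" "g (P-1) = l"
    using wp_facts[OF wp] unfolding P_def f_def g_def by auto
  have st: "\<And>k. Suc k < P \<Longrightarrow> f k \<le> f (Suc k) \<and> f (Suc k) \<le> f k + 1 \<and> g k \<le> g (Suc k) \<and> g (Suc k) \<le> g k + 1 \<and> f k + g k < f (Suc k) + g (Suc k)"
    using wp_facts(6)[OF wp] unfolding P_def f_def g_def by blast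
  have win: "\<And>k. k < P \<Longrightarrow> int (f k) - int w \<le> int (g k) \<and> int (g k) \<le> int (f k) + int w"
    using wp_facts(7)[OF wp] unfolding P_def f_def g_def by blast
  have fmono: "\<And>k k'. k \<le> k' \<Longrightarrow> k' < P \<Longrightarrow> f k \<le> f k'"
    using mono_path[of P f] st by blast
  have gmono: "\<And>k k'. k \<le> k' \<Longrightarrow> k' < P \<Longrightarrow> g k \<le> g k'"
    using mono_path[of P g] st by blast
  have bnd: "\<And>k. k < P \<Longrightarrow> 1 \<le> f k \<and> f k \<le> l \<and> 1 \<le> g k \<and> g k \<le> l"
  proof -
    fix k assume k: "k < P"
    show "1 \<le> f k \<and> f k \<le> l \<and> 1 \<le> g k \<and> g k \<le> l"
      using fmono[of 0 k] fmono[of k "P-1"] gmono[of 0 k] gmono[of k "P-1"] f0 fl k by auto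
  qed
  define D where "D = (\<lambda>k. \<delta> (A (f k)) (B (g k)))"
  have cost: "path_cost \<delta> A B p = (\<Sum>k<P. D k)" unfolding path_cost_def D_def P_def f_def g_def by simp
  define \<kappa> where "\<kappa> = kappa \<delta> l w A B"
  define \<beta> where "\<beta> = beta \<delta> l w A B"
  have knn: "\<And>i. \<kappa> i \<ge> 0" unfolding \<kappa>_def kappa_def using nn by auto
  have bnn: "\<And>j. \<beta> j \<ge> 0" unfolding \<beta>_def beta_def Let_def by (rule beta_nn)
  have Dnn: "\<And>k. D k \<ge> 0" unfolding D_def using nn by auto
  have cellk: "\<And>k. k < P \<Longrightarrow> D k \<ge> \<kappa> (f k) + \<beta> (g k)"
  proof -
    fix k assume k: "k < P"
    have b: "1 \<le> f k" "f k \<le> l" "1 \<le> g k" "g k \<le> l" using bnd[OF k] by auto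
    have wk: "int (f k) - int w \<le> int (g k)" "int (g k) \<le> int (f k) + int w" using win[OF k] by auto
    have wk': "int (g k) - int w \<le> int (f k)" "int (f k) \<le> int (g k) + int w" using wk by auto
    note e1 = env[OF b wk, of B]
    note e2 = env[OF b(3,4,1,2) wk', of A]
    note e3 = env[OF b(3,4,1,2) wk', of "proj l w A B"]
    show "D k \<ge> \<kappa> (f k) + \<beta> (g k)"
      unfolding D_def \<kappa>_def \<beta>_def kappa_def beta_def Let_def
      by (rule cell[OF e1 e2 e3]) (simp add: proj_def)
  qed
  define R where "R = {4..l-3}"
  have finR: "finite R" unfolding R_def by simp
  have exf: "\<And>i. i \<in> R \<Longrightarrow> \<exists>k<P. f k = i"
  proof -
    fix i assume "i \<in> R"
    then have "f 0 \<le> i" "i \<le> f (P-1)" using f0 fl unfolding R_def by auto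
    from ivt[OF this] obtain k where "k \<le> P-1" "f k = i" using st by force
    then show "\<exists>k<P. f k = i" using P0 by (intro exI[of _ k]) auto
  qed
  have exg: "\<And>i. i \<in> R \<Longrightarrow> \<exists>k<P. g k = i"
  proof -
    fix i assume "i \<in> R"
    then have "g 0 \<le> i" "i \<le> g (P-1)" using f0 fl unfolding R_def by auto
    from ivt[OF this] obtain k where "k \<le> P-1" "g k = i" using st by force
    then show "\<exists>k<P. g k = i" using P0 by (intro exI[of _ k]) auto
  qed
  define fr where "fr = (\<lambda>i. LEAST k. f k = i)"
  define gr where "gr = (\<lambda>i. LEAST k. g k = i)"
  have fr: "\<And>i. i \<in> R \<Longrightarrow> fr i < P \<and> f (fr i) = i"
  proof -
    fix i assume "i \<in> R"
    then obtain k where k: "k < P" "f k = i" using exf by blast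
    have "f (fr i) = i" unfolding fr_def by (rule LeastI[of _ k]) (rule k(2))
    moreover have "fr i \<le> k" unfolding fr_def by (rule Least_le) (rule k(2))
    ultimately show "fr i < P \<and> f (fr i) = i" using k by auto
  qed
  have gr: "\<And>i. i \<in> R \<Longrightarrow> gr i < P \<and> g (gr i) = i"
  proof -
    fix i assume "i \<in> R"
    then obtain k where k: "k < P" "g k = i" using exg by blast
    have "g (gr i) = i" unfolding gr_def by (rule LeastI[of _ k]) (rule k(2))
    moreover have "gr i \<le> k" unfolding gr_def by (rule Least_le) (rule k(2))
    ultimately show "gr i < P \<and> g (gr i) = i" using k by auto
  qed
  define kp where "kp = (\<lambda>k. \<Sum>i\<in>R. if fr i = k then \<kappa> i else 0)"
  define bp where "bp = (\<lambda>k. \<Sum>j\<in>R. if gr j = k then \<beta> j else 0)"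
  have kp_le: "\<And>k. kp k \<le> (if f k \<in> R then \<kappa> (f k) else 0)"
  proof -
    fix k
    have "kp k \<le> (\<Sum>i\<in>R. if i = f k then \<kappa> i else 0)"
      unfolding kp_def by (rule sum_mono) (use fr knn in auto)
    also have "\<dots> = (if f k \<in> R then \<kappa> (f k) else 0)" using finR by simp
    finally show "kp k \<le> (if f k \<in> R then \<kappa> (f k) else 0)" .
  qed
  have bp_le: "\<And>k. bp k \<le> (if g k \<in> R then \<beta> (g k) else 0)"
  proof -
    fix k
    have "bp k \<le> (\<Sum>i\<in>R. if i = g k then \<beta> i else 0)"
      unfolding bp_def by (rule sum_mono) (use gr bnn in auto)
    also have "\<dots> = (if g k \<in> R then \<beta> (g k) else 0)" using finR by simp
    finally show "bp k \<le> (if g k \<in> R then \<beta> (g k) else 0)" .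
  qed
  have sum_kp: "(\<Sum>k<P. kp k) = (\<Sum>i\<in>R. \<kappa> i)"
  proof -
    have "(\<Sum>k<P. kp k) = (\<Sum>i\<in>R. \<Sum>k<P. if fr i = k then \<kappa> i else 0)"
      unfolding kp_def by (rule sum.swap)
    also have "\<dots> = (\<Sum>i\<in>R. \<kappa> i)"
      by (rule sum.cong) (use fr in auto)
    finally show ?thesis .
  qed
  have sum_bp: "(\<Sum>k<P. bp k) = (\<Sum>i\<in>R. \<beta> i)"
  proof -
    have "(\<Sum>k<P. bp k) = (\<Sum>i\<in>R. \<Sum>k<P. if gr i = k then \<beta> i else 0)"
      unfolding bp_def by (rule sum.swap)
    also have "\<dots> = (\<Sum>i\<in>R. \<beta> i)"
      by (rule sum.cong) (use gr in auto)
    finally show ?thesis .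
  qed
  define F where "F = {k. k < P \<and> f k \<le> 3 \<and> g k \<le> 3}"
  define Bk where "Bk = {k. k < P \<and> f k \<ge> l-2 \<and> g k \<ge> l-2}"
  define M where "M = {..<P} - (F \<union> Bk)"
  have finF: "finite F" unfolding F_def by simp
  have finBk: "finite Bk" unfolding Bk_def by simp
  have disj: "F \<inter> Bk = {}" using l6 by (auto simp: F_def Bk_def)
  have sub: "F \<union> Bk \<subseteq> {..<P}" by (auto simp: F_def Bk_def)
  have split: "\<And>h :: nat \<Rightarrow> real. (\<Sum>k<P. h k) = (\<Sum>k\<in>M. h k) + ((\<Sum>k\<in>F. h k) + (\<Sum>k\<in>Bk. h k))"
  proof -
    fix h :: "nat \<Rightarrow> real"
    have 1: "(\<Sum>k<P. h k) = (\<Sum>k\<in>M. h k) + (\<Sum>k\<in>F \<union> Bk. h k)"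
      unfolding M_def by (rule sum.subset_diff[OF sub]) simp
    have 2: "(\<Sum>k\<in>F \<union> Bk. h k) = (\<Sum>k\<in>F. h k) + (\<Sum>k\<in>Bk. h k)"
      by (rule sum.union_disjoint[OF finF finBk disj])
    from 1 2 show "(\<Sum>k<P. h k) = (\<Sum>k\<in>M. h k) + ((\<Sum>k\<in>F. h k) + (\<Sum>k\<in>Bk. h k))" by simp
  qed
  have kbF: "(\<Sum>k\<in>F. kp k + bp k) \<le> 0"
  proof (rule sum_nonpos)
    fix k assume "k \<in> F"
    then have "f k \<notin> R" "g k \<notin> R" unfolding F_def R_def by auto
    then show "kp k + bp k \<le> 0" using kp_le[of k] bp_le[of k] by auto
  qed
  have kbB: "(\<Sum>k\<in>Bk. kp k + bp k) \<le> 0"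
  proof (rule sum_nonpos)
    fix k assume "k \<in> Bk"
    then have "f k \<notin> R" "g k \<notin> R" using l6 unfolding Bk_def R_def by auto
    then show "kp k + bp k \<le> 0" using kp_le[of k] bp_le[of k] by auto
  qed
  have midM: "(\<Sum>k\<in>M. kp k + bp k) \<le> (\<Sum>k\<in>M. D k)"
  proof (rule sum_mono)
    fix k assume "k \<in> M"
    then have k: "k < P" unfolding M_def by auto
    show "kp k + bp k \<le> D k"
      using kp_le[of k] bp_le[of k] cellk[OF k] knn[of "f k"] bnn[of "g k"]
      by (auto split: if_splits)
  qed
  have mid: "(\<Sum>i\<in>R. \<kappa> i) + (\<Sum>i\<in>R. \<beta> i) \<le> (\<Sum>k\<in>M. D k)"
  proof -
    have "(\<Sum>i\<in>R. \<kappa> i) + (\<Sum>i\<in>R. \<beta> i) = (\<Sum>k<P. kp k + bp k)"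
      using sum_kp sum_bp by (simp add: sum.distrib)
    also have "\<dots> = (\<Sum>k\<in>M. kp k + bp k) + ((\<Sum>k\<in>F. kp k + bp k) + (\<Sum>k\<in>Bk. kp k + bp k))"
      by (rule split)
    also have "\<dots> \<le> (\<Sum>k\<in>M. D k)" using kbF kbB midM by linarith
    finally show ?thesis .
  qed
  define S1 where "S1 = {\<delta> (A 1) (B 2) + \<delta> (A 1) (B 3), \<delta> (A 1) (B 2) + \<delta> (A 2) (B 3),
      \<delta> (A 2) (B 2) + \<delta> (A 2) (B 3), \<delta> (A 2) (B 2) + \<delta> (A 3) (B 3),
      \<delta> (A 2) (B 2) + \<delta> (A 3) (B 2), \<delta> (A 2) (B 1) + \<delta> (A 3) (B 2), \<delta> (A 2) (B 1) + \<delta> (A 3) (B 1)}"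
  define S2 where "S2 = {\<delta> (A l) (B (l-1)) + \<delta> (A l) (B (l-2)), \<delta> (A l) (B (l-1)) + \<delta> (A (l-1)) (B (l-2)),
      \<delta> (A (l-1)) (B (l-1)) + \<delta> (A (l-1)) (B (l-2)), \<delta> (A (l-1)) (B (l-1)) + \<delta> (A (l-2)) (B (l-2)),
      \<delta> (A (l-1)) (B (l-1)) + \<delta> (A (l-2)) (B (l-1)), \<delta> (A (l-1)) (B l) + \<delta> (A (l-2)) (B (l-1)),
      \<delta> (A (l-1)) (B l) + \<delta> (A (l-2)) (B l)}"
  have LBeq: "LB_Petitjean \<delta> l w A B = \<delta> (A 1) (B 1) + \<delta> (A l) (B l) + Min S1 + Min S2
      + (\<Sum>i\<in>R. \<kappa> i) + (\<Sum>i\<in>R. \<beta> i)"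
    unfolding LB_Petitjean_def minlrpaths_def Let_def S1_def S2_def R_def \<kappa>_def \<beta>_def by (rule refl)
  obtain p1 q1 where pq1: "0 < p1" "p1 < q1" "q1 < P" "f p1 \<le> 3" "g p1 \<le> 3" "f q1 \<le> 3" "g q1 \<le> 3"
    and mem1: "(f p1, g p1, f q1, g q1) \<in> {(1,2,1,3),(1,2,2,3),(2,2,2,3),(2,2,3,3),(2,2,3,2),(2,1,3,2),(2,1,3,1)}"
    using front[OF P0 f0 fl l6 st] by blast
  have "D p1 + D q1 \<in> S1" using mem1 unfolding S1_def D_def by auto
  then have m1: "Min S1 \<le> D p1 + D q1" by (rule Min_le[rotated]) (simp add: S1_def)
  have fr1: "(\<Sum>k\<in>{0,p1,q1}. D k) \<le> (\<Sum>k\<in>F. D k)"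
    by (rule sum_mono2[OF finF]) (use pq1 P0 f0 Dnn in \<open>auto simp: F_def\<close>)
  have fr1': "(\<Sum>k\<in>{0,p1,q1}. D k) = D 0 + D p1 + D q1" using pq1 by simp
  obtain p2 q2 where pq2: "q2 < p2" "p2 < P - 1" "f p2 \<ge> l-2" "g p2 \<ge> l-2" "f q2 \<ge> l-2" "g q2 \<ge> l-2"
    and mem2: "(f p2, g p2, f q2, g q2) \<in> {(l,l-1,l,l-2), (l,l-1,l-1,l-2), (l-1,l-1,l-1,l-2), (l-1,l-1,l-2,l-2),
         (l-1,l-1,l-2,l-1), (l-1,l,l-2,l-1), (l-1,l,l-2,l)}"
    using back_part[OF P0 f0 fl l6 st] by blast
  have "D p2 + D q2 \<in> S2" using mem2 unfolding S2_def D_def by auto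
  then have m2: "Min S2 \<le> D p2 + D q2" by (rule Min_le[rotated]) (simp add: S2_def)
  have pq2': "p2 < P" "q2 < P" "P - 1 < P" using pq2 P0 by auto
  have "{P-1,p2,q2} \<subseteq> Bk" using pq2 pq2' fl l6 unfolding Bk_def by auto
  then have bk1: "(\<Sum>k\<in>{P-1,p2,q2}. D k) \<le> (\<Sum>k\<in>Bk. D k)"
    by (rule sum_mono2[OF finBk]) (use Dnn in auto)
  have bk1': "(\<Sum>k\<in>{P-1,p2,q2}. D k) = D (P-1) + D p2 + D q2" using pq2 by simp
  have D0: "D 0 = \<delta> (A 1) (B 1)" unfolding D_def using f0 by simp
  have DP: "D (P-1) = \<delta> (A l) (B l)" unfolding D_def using fl by simp
  show ?thesis
    unfolding LBeq cost using split[of D] mid m1 m2 fr1 fr1' bk1 bk1' D0 DP by linarith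
qed

end

theorem theorem1:
  fixes l w :: nat and A B :: "nat \<Rightarrow> real" and \<delta> :: "real \<Rightarrow> real \<Rightarrow> real"
  assumes "l \<ge> 6"
    and "\<And>a b. \<delta> a b \<ge> 0"
    and "\<And>a b. \<delta> a b = \<delta> b a"
    and "\<And>a. \<delta> a a = 0"
    and "\<And>a b x y. (a \<le> x \<and> x \<le> y \<and> y \<le> b) \<or> (a \<ge> x \<and> x \<ge> y \<and> y \<ge> b) \<Longrightarrow>
           \<delta> a b \<ge> \<delta> a y + \<delta> b x - \<delta> x y"
  shows "LB_Petitjean \<delta> l w A B \<le> DTW \<delta> l w A B"
  proof -
  have ne: "{path_cost \<delta> A B p | p. warping_path l w p} \<noteq> {}"
    using diag_wp[of l w] assms(1) by auto
  show ?thesis unfolding DTW_def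
    by (rule cInf_greatest[OF ne]) (use path_bound[OF assms(2-5) assms(1)] in auto)
qed

end
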